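(* Let $h:\mathbb{T}^2\to\mathbb{R}^4$ and $D=D_1+iD_2:\mathbb{T}^2\to\mathbb{C}$ be smooth, let $H(\mathbf{k})=\vec h(\mathbf{k})\cdot\vec S+\vec h'(\mathbf{k})\cdot\vec T$ be the family of $4\times 4$ Hermitian matrices defined in the context, and assume $\det H(\mathbf{k})\neq0$ for all $\mathbf{k}\in\mathbb{T}^2$. Then: (i) The function $p(\mathbf{k})=|\vec h(\mathbf{k})|^2-|\vec h'(\mathbf{k})|^2$ is either strictly positive for all $\mathbf{k}$ or strictly negative for all $\mathbf{k}$. If $p>0$, there is a smooth homotopy $H_t(\mathbf{k})$, $t\in[0,1]$, of families of Hermitian matrices with $\det H_t(\mathbf{k})\ne0$ for all $t,\mathbf{k}$, $H_0=H$ and $H_1(\mathbf{k})=\widetilde H(\mathbf{k})=\vec h(\mathbf{k})\cdot\vec S/|\vec h(\mathbf{k})|$; if $p<0$, the same holds with $\widetilde H(\mathbf{k})=\vec h'(\mathbf{k})\cdot\vec T/|\vec h'(\mathbf{k})|$. (In particular a family with $p>0$ cannot be deformed through nonsingular families of this form into one with $p<0$.) (ii) Let $E\to\mathbb{T}^2$ be the occupied Bloch bundle, whose fiber at $\mathbf{k}$ is the span of the eigenvectors of $H(\mathbf{k})$ with negative eigenvalues (a rank-2 complex vector bundle). Then the first Chern number of $E$ equals twice the degree (winding number) of the map $\Phi_1:\mathbb{T}^2\to S^2$, $\mathbf{k}\mapsto\vec h(\mathbf{k})/|\vec h(\mathbf{k})|$, if $p>0$, and twice the degree of $\Phi_2:\mathbb{T}^2\to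 S^2$, $\mathbf{k}\mapsto \vec h'(\mathbf{k})/|\vec h'(\mathbf{k})|$, if $p<0$. (iii) If $H(\mathbf{k})$ is regarded as a Bogoliubov–de Gennes Hamiltonian (particle and hole degrees of freedom doubled), the Chern number of the system, defined as one half of the first Chern number of $E$ to account for the doubling, equals the degree of $\Phi_1$ if $p>0$ and the degree of $\Phi_2$ if $p<0$.
   Context: $\tau_0$ is the $2\times2$ identity and $\tau_1,\tau_2,\tau_3$ are the Pauli matrices; $h\cdot\tau=\sum_{\mu=0}^3h_\mu\tau_\mu$. $\mathbb{T}^2$ is the Brillouin zone (two-torus). The family is $$H(\mathbf{k})=\begin{pmatrix} h(\mathbf{k})\cdot\tau & iD^*(\mathbf{k})\tau_2\\ -iD(\mathbf{k})\tau_2 & -(h(\mathbf{k})\cdot\tau)^T\end{pmatrix}.$$ Set $\vec h=(h_1,h_2,h_3)$ and $\vec h'=(D_1,D_2,h_0)$, and define the $4\times4$ matrices (in $2\times2$ block form, $I$ the $2\times 2$ identity) $S_1=\mathrm{diag}(\tau_1,-\tau_1)$, $S_2=\mathrm{diag}(\tau_2,\tau_2)$, $S_3=\mathrm{diag}(\tau_3,-\tau_3)$, $T_1=\begin{pmatrix}0&i\tau_2\\-i\tau_2&0\end{pmatrix}$, $T_2=\begin{pmatrix}0&\tau_2\\\tau_2&0\end{pmatrix}$, $T_3=\mathrm{diag}(I,-I)$, so that $H(\mathbf{k})=\vec h(\mathbf{k})\cdot\vec S+\vec h'(\mathbf{k})\cdot\vec T$ with $\vec h\cdot\vec S=\sum_i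 h_iS_i$, $\vec h'\cdot\vec T=\sum_i h'_iT_i$. The degree of a map $\mathbb{T}^2\to S^2$ is taken with respect to the standard orientations, with the convention that the negative-energy eigenline bundle of $\hat n(\mathbf{k})\cdot(\tau_1,\tau_2,\tau_3)$ has Chern number equal to the degree of $\hat n$. *)

theory Defs
  imports "HOL-Analysis.Analysis"
begin

coinductive smooth :: "('a::euclidean_space \<Rightarrow> 'b::real_normed_vector) \<Rightarrow> bool" where
  smoothI: "(\<forall>x. f differentiable (at x)) \<Longrightarrow>
            (\<forall>v. smooth (\<lambda>x. frechet_derivative f (at x) v)) \<Longrightarrow> smooth f"

text \<open>Functions on the torus are represented as Z^2-periodic functions on R^2;
  the fundamental domain is the unit square [0,1] x [0,1].\<close>
definition periodic2 :: "(real \<times> real \<Rightarrow> 'b) \<Rightarrow> bool" where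
  "periodic2 f \<longleftrightarrow> (\<forall>x y. f (x + 1, y) = f (x, y) \<and> f (x, y + 1) = f (x, y))"

definition unit_square :: "(real \<times> real) set" where
  "unit_square = cbox (0, 0) (1, 1)"

definition dx :: "(real \<times> real \<Rightarrow> 'b::real_normed_vector) \<Rightarrow> real \<times> real \<Rightarrow> 'b" where
  "dx f k = frechet_derivative f (at k) (1, 0)"

definition dy :: "(real \<times> real \<Rightarrow> 'b::real_normed_vector) \<Rightarrow> real \<times> real \<Rightarrow> 'b" where
  "dy f k = frechet_derivative f (at k) (0, 1)"

definition cadj :: "complex^'n^'n \<Rightarrow> complex^'n^'n" where
  "cadj A = (\<chi> i j. cnj (A $ j $ i))"

definition hermitian :: "complex^'n^'n \<Rightarrow> bool" where
  "hermitian A \<longleftrightarrow> cadj A = A"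

text \<open>2x2 matrices as functions on indices 0,1; the Pauli matrices tau_0..tau_3.\<close>
type_synonym m2 = "nat \<Rightarrow> nat \<Rightarrow> complex"

definition tau0 :: m2 where "tau0 a b = (if a = b then 1 else 0)"
definition tau1 :: m2 where "tau1 a b = (if a \<noteq> b then 1 else 0)"
definition tau2 :: m2 where
  "tau2 a b = (if a = 0 \<and> b = 1 then - \<i> else if a = 1 \<and> b = 0 then \<i> else 0)"
definition tau3 :: m2 where
  "tau3 a b = (if a = b then (if a = 0 then 1 else -1) else 0)"

definition zero2 :: m2 where "zero2 a b = 0"

text \<open>Indices of 4x4 matrices: the elements of type 4 correspond to 0,1,2,3.\<close>
definition idx4 :: "4 \<Rightarrow> nat" where "idx4 i = nat (Rep_bit0 i)"

definition blk :: "m2 \<Rightarrow> m2 \<Rightarrow> m2 \<Rightarrow> m2 \<Rightarrow> complex^4^4" where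
  "blk A B C Dm = (\<chi> i j. let a = idx4 i; b = idx4 j in
      (if a < 2 then (if b < 2 then A a b else B a (b - 2))
                else (if b < 2 then C (a - 2) b else Dm (a - 2) (b - 2))))"

definition S1 :: "complex^4^4" where "S1 = blk tau1 zero2 zero2 (\<lambda>a b. - tau1 a b)"
definition S2 :: "complex^4^4" where "S2 = blk tau2 zero2 zero2 tau2"
definition S3 :: "complex^4^4" where "S3 = blk tau3 zero2 zero2 (\<lambda>a b. - tau3 a b)"
definition T1 :: "complex^4^4" where
  "T1 = blk zero2 (\<lambda>a b. \<i> * tau2 a b) (\<lambda>a b. - \<i> * tau2 a b) zero2"
definition T2 :: "complex^4^4" where "T2 = blk zero2 tau2 tau2 zero2"
definition T3 :: "complex^4^4" where "T3 = blk tau0 zero2 zero2 (\<lambda>a b. - tau0 a b)"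

text \<open>h(k) = (h_0, h_1, h_2, h_3) is stored as h k :: real^4 with components
  h k $ 0, h k $ 1, h k $ 2, h k $ 3.\<close>
definition hdot_tau :: "real^4 \<Rightarrow> m2" where
  "hdot_tau v a b = complex_of_real (v $ 0) * tau0 a b + complex_of_real (v $ 1) * tau1 a b
                  + complex_of_real (v $ 2) * tau2 a b + complex_of_real (v $ 3) * tau3 a b"

definition Hmat :: "(real \<times> real \<Rightarrow> real^4) \<Rightarrow> (real \<times> real \<Rightarrow> complex) \<Rightarrow> real \<times> real \<Rightarrow> complex^4^4" where
  "Hmat h D k = blk (hdot_tau (h k))
                    (\<lambda>a b. \<i> * cnj (D k) * tau2 a b)
                    (\<lambda>a b. - \<i> * D k * tau2 a b)
                    (\<lambda>a b. - hdot_tau (h k) b a)"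

definition hvec :: "(real \<times> real \<Rightarrow> real^4) \<Rightarrow> real \<times> real \<Rightarrow> real^3" where
  "hvec h k = vector [h k $ 1, h k $ 2, h k $ 3]"

definition hvec' :: "(real \<times> real \<Rightarrow> real^4) \<Rightarrow> (real \<times> real \<Rightarrow> complex) \<Rightarrow> real \<times> real \<Rightarrow> real^3" where
  "hvec' h D k = vector [Re (D k), Im (D k), h k $ 0]"

definition vS :: "real^3 \<Rightarrow> complex^4^4" where
  "vS v = v $ 1 *\<^sub>R S1 + v $ 2 *\<^sub>R S2 + v $ 3 *\<^sub>R S3"

definition vT :: "real^3 \<Rightarrow> complex^4^4" where
  "vT v = v $ 1 *\<^sub>R T1 + v $ 2 *\<^sub>R T2 + v $ 3 *\<^sub>R T3"

definition pfun :: "(real \<times> real \<Rightarrow> real^4) \<Rightarrow> (real \<times> real \<Rightarrow> complex) \<Rightarrow> real \<times> real \<Rightarrow> real" where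
  "pfun h D k = (norm (hvec h k))\<^sup>2 - (norm (hvec' h D k))\<^sup>2"

definition neg_space :: "complex^'n^'n \<Rightarrow> (complex^'n) set" where
  "neg_space A = span {v. \<exists>l::real. l < 0 \<and> A *v v = complex_of_real l *s v}"

definition neg_proj :: "complex^'n^'n \<Rightarrow> complex^'n^'n" where
  "neg_proj A = (THE P. P ** P = P \<and> hermitian P \<and> range (\<lambda>v. P *v v) = neg_space A)"

text \<open>First Chern number of the subbundle of the trivial bundle T^2 x C^n given by a
  smooth periodic family of orthogonal projectors P (Chern-Weil):
  c_1 = (i / 2 pi) * integral over T^2 of tr(P [d_x P, d_y P]).\<close>
definition chern_number :: "(real \<times> real \<Rightarrow> complex^'n^'n) \<Rightarrow> complex" where
  "chern_number P = (\<i> / (2 * complex_of_real pi)) *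
     integral unit_square (\<lambda>k. trace (P k ** (dx P k ** dy P k - dy P k ** dx P k)))"

definition occupied_chern :: "(real \<times> real \<Rightarrow> complex^'n^'n) \<Rightarrow> complex" where
  "occupied_chern H = chern_number (\<lambda>k. neg_proj (H k))"

definition bdg_chern :: "(real \<times> real \<Rightarrow> complex^'n^'n) \<Rightarrow> complex" where
  "bdg_chern H = occupied_chern H / 2"

definition degree_S2 :: "(real \<times> real \<Rightarrow> real^3) \<Rightarrow> real" where
  "degree_S2 n = (1 / (4 * pi)) * integral unit_square (\<lambda>k. n k \<bullet> cross3 (dx n k) (dy n k))"


lemma idx4_simps: "idx4 4 = 0" "idx4 1 = 1" "idx4 2 = 2" "idx4 3 = 3"
  by (simp_all add: idx4_def bit0.Rep_numeral bit0.Rep_1)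

lemma Hmat_decomp: "Hmat h D k = vS (hvec h k) + vT (hvec' h D k)"
proof -
  have z: "(0::4) = 4" by simp
  have v: "vector [a,b,c] $ (1::3) = a" "vector [a,b,c] $ (2::3) = b" "vector [a,b,c] $ (3::3) = c"
    for a b c :: real by (simp_all add: vector_def)
  have "\<forall>i j. Hmat h D k $ i $ j = (vS (hvec h k) + vT (hvec' h D k)) $ i $ j"
    unfolding Hmat_def vS_def vT_def hvec_def hvec'_def S1_def S2_def S3_def T1_def T2_def T3_def forall_4
    by (simp add: blk_def Let_def v z idx4_simps hdot_tau_def tau0_def tau1_def tau2_def tau3_def
        zero2_def complex_eq_iff)
  then show ?thesis by (simp add: vec_eq_iff)
qed

end

theory Submission
  imports Defs
begin


definition cs :: "complex \<Rightarrow> complex^'n^'n \<Rightarrow> complex^'n^'n" where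
  "cs c M = (\<chi> i j. c * M $ i $ j)"

lemma v3: "vector [a,b,c] $ (1::3) = a" "vector [a,b,c] $ (2::3) = b" "vector [a,b,c] $ (3::3) = c"
    for a b c :: "'a::zero" by (simp_all add: vector_def)

lemma z4: "(0::4) = 4" by simp

lemmas ent_simps = blk_def Let_def z4 idx4_simps hdot_tau_def tau0_def tau1_def tau2_def tau3_def zero2_def
   S1_def S2_def S3_def T1_def T2_def T3_def vS_def vT_def

lemma vS_vS: "vS u ** vS v = (u \<bullet> v) *\<^sub>R mat 1 + cs \<i> (vS (cross3 u v))"
  unfolding vec_eq_iff forall_4 matrix_matrix_mult_def
  by (simp add: ent_simps sum_4 inner_vec_def sum_3 cross3_simps cs_def mat_def complex_eq_iff algebra_simps)

lemma vT_vT: "vT u ** vT v = (u \<bullet> v) *\<^sub>R mat 1 + cs \<i> (vT (cross3 u v))"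
  unfolding vec_eq_iff forall_4 matrix_matrix_mult_def
  by (simp add: ent_simps sum_4 inner_vec_def sum_3 cross3_simps cs_def mat_def complex_eq_iff algebra_simps)

lemma vS_vT: "vS u ** vT v = vT v ** vS u"
  unfolding vec_eq_iff forall_4 matrix_matrix_mult_def
  by (simp add: ent_simps sum_4 complex_eq_iff algebra_simps)

lemma herm_vS: "hermitian (vS u)"
  unfolding hermitian_def cadj_def vec_eq_iff forall_4
  by (simp add: ent_simps complex_eq_iff)

lemma herm_vT: "hermitian (vT u)"
  unfolding hermitian_def cadj_def vec_eq_iff forall_4
  by (simp add: ent_simps complex_eq_iff)

lemma tr_vS: "trace (vS u) = 0"
  by (simp add: trace_def sum_4 ent_simps)

lemma tr_vT: "trace (vT u) = 0"
  by (simp add: trace_def sum_4 ent_simps)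

lemma tr_one: "trace (mat 1 :: complex^4^4) = 4"
  by (simp add: trace_def sum_4 mat_def)

lemma vS_vT_eq: "vS x = vT y \<Longrightarrow> x = 0 \<and> y = 0"
  unfolding vec_eq_iff forall_4 forall_3
  by (simp add: ent_simps complex_eq_iff)


lemma mv_smult: "(M::complex^'n^'m) *v (c *s v) = c *s (M *v v)"
  by (simp add: vec_eq_iff matrix_vector_mult_def sum_distrib_left algebra_simps)

lemma scaleR_mv: "((c::real) *\<^sub>R (M::complex^'n^'m)) *v v = complex_of_real c *s (M *v v)"
  unfolding vec_eq_iff matrix_vector_mult_def vector_scaleR_component
  by (simp add: sum_distrib_left algebra_simps scaleR_conv_of_real del: of_real_mult)

lemma cadj_mult: "cadj ((A::complex^'n^'n) ** B) = cadj B ** cadj A"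
  by (simp add: vec_eq_iff cadj_def matrix_matrix_mult_def mult.commute)

lemma proj_unique:
  fixes P Q :: "complex^'n^'n"
  assumes "P ** P = P" "hermitian P" "Q ** Q = Q" "hermitian Q"
    and r: "range (\<lambda>v. P *v v) = range (\<lambda>v. Q *v v)"
  shows "P = Q"
proof -
  have QP: "Q ** P = P"
  proof (rule matrix_eq[THEN iffD2], intro allI)
    fix v
    obtain w where w: "P *v v = Q *v w" using r by (metis rangeE rangeI)
    have "(Q ** P) *v v = Q *v (Q *v w)" by (simp add: w matrix_vector_mul_assoc[symmetric])
    also have "\<dots> = Q *v w" using assms(3) by (simp add: matrix_vector_mul_assoc)
    finally show "(Q ** P) *v v = P *v v" using w by simp
  qed
  have PQ: "P ** Q = Q"
  proof (rule matrix_eq[THEN iffD2], intro allI)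
    fix v
    obtain w where w: "Q *v v = P *v w" using r by (metis rangeE rangeI)
    have "(P ** Q) *v v = P *v (P *v w)" by (simp add: w matrix_vector_mul_assoc[symmetric])
    also have "\<dots> = P *v w" using assms(1) by (simp add: matrix_vector_mul_assoc)
    finally show "(P ** Q) *v v = Q *v v" using w by simp
  qed
  have "P = cadj P" using assms(2) by (simp add: hermitian_def)
  also have "\<dots> = cadj (Q ** P)" by (simp add: QP)
  also have "\<dots> = cadj P ** cadj Q" by (simp add: cadj_mult)
  also have "\<dots> = P ** Q" using assms(2,4) by (simp add: hermitian_def)
  finally show ?thesis using PQ by simp
qed


lemma mvs: "(M::complex^'n^'m) *v (c *\<^sub>R v) = c *\<^sub>R (M *v v)"
  unfolding vec_eq_iff matrix_vector_mult_def vector_scaleR_component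
  by (simp add: scaleR_conv_of_real sum_distrib_left mult.left_commute mult.assoc)

lemma smvs: "((c::real) *\<^sub>R (M::complex^'n^'m)) *v v = c *\<^sub>R (M *v v)"
  unfolding vec_eq_iff matrix_vector_mult_def vector_scaleR_component
  by (simp add: scaleR_conv_of_real sum_distrib_left mult.left_commute mult.assoc)

lemma ofr_s: "complex_of_real l *s v = l *\<^sub>R (v::complex^'n)"
  unfolding vec_eq_iff vector_scaleR_component vector_smult_component
  by (simp add: scaleR_conv_of_real)

lemma neg_proj_AB:
  fixes A B :: "complex^'n^'n" and a b :: real
  assumes hA: "hermitian A" and comm: "A ** B = B ** A"
    and AA: "A ** A = (a^2) *\<^sub>R mat 1" and BB: "B ** B = (b^2) *\<^sub>R mat 1"
    and b0: "0 \<le> b" and ab: "b < a" and bz: "b = 0 \<Longrightarrow> B = 0"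
  shows "neg_proj (A + B) = (1/2) *\<^sub>R (mat 1 - (1/a) *\<^sub>R A)"
proof -
  define P where "P = (1/2) *\<^sub>R (mat 1 - (1/a) *\<^sub>R A)"
  have a0: "a > 0" using b0 ab by simp
  have AAv: "A *v (A *v v) = (a^2) *\<^sub>R v" for v
    by (simp add: matrix_vector_mul_assoc AA smvs)
  have BBv: "B *v (B *v v) = (b^2) *\<^sub>R v" for v
    by (simp add: matrix_vector_mul_assoc BB smvs)
  have ABv: "A *v (B *v v) = B *v (A *v v)" for v
    by (simp add: matrix_vector_mul_assoc comm)
  have Pv: "P *v v = (1/2) *\<^sub>R (v - (1/a) *\<^sub>R (A *v v))" for v
    by (simp add: P_def smvs matrix_vector_mult_diff_rdistrib)
  have PP: "P ** P = P"
  proof (rule matrix_eq[THEN iffD2], intro allI)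
    fix v
    have "(P ** P) *v v = P *v (P *v v)" by (simp add: matrix_vector_mul_assoc)
    also have "\<dots> = P *v v" unfolding Pv mvs matrix_vector_mult_diff_distrib AAv
      using a0 by (simp only: vec_eq_iff vector_scaleR_component vector_minus_component vector_add_component)
         (simp add: scaleR_conv_of_real field_simps power2_eq_square)
    finally show "(P ** P) *v v = P *v v" .
  qed
  let ?E = "{v. A *v v = (-a) *\<^sub>R v}"
  have hP: "hermitian P"
  proof -
    have c: "cnj (A $ j $ i) = A $ i $ j" for i j
      using hA unfolding hermitian_def cadj_def vec_eq_iff by auto
    show ?thesis unfolding hermitian_def cadj_def P_def vec_eq_iff
      by (simp add: c mat_def)
  qed
  have AP: "A *v (P *v v) = (-a) *\<^sub>R (P *v v)" for v
  proof -
    have "A *v (P *v v) = (1/2) *\<^sub>R (A *v v - (1/a) *\<^sub>R ((a^2) *\<^sub>R v))"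
      by (simp add: Pv mvs matrix_vector_mult_diff_distrib AAv)
    also have "\<dots> = (1/2) *\<^sub>R (A *v v) - (a/2) *\<^sub>R v"
      using a0 by (simp add: scaleR_right_diff_distrib power2_eq_square)
    also have "\<dots> = (-a) *\<^sub>R (P *v v)"
      using a0 by (simp add: Pv scaleR_right_diff_distrib)
    finally show ?thesis .
  qed
  have EP: "v \<in> ?E \<Longrightarrow> P *v v = v" for v
    unfolding Pv using a0
    by (simp only: mem_Collect_eq vec_eq_iff vector_scaleR_component vector_minus_component vector_add_component)
         (simp add: scaleR_conv_of_real field_simps)
  have rP: "range (\<lambda>v. P *v v) = ?E"
  proof
    show "range (\<lambda>v. P *v v) \<subseteq> ?E"
    proof (rule subsetI)
      fix x assume "x \<in> range (\<lambda>v. P *v v)"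
      then obtain v where "x = P *v v" by blast
      then show "x \<in> ?E" using AP[of v] by simp
    qed
    show "?E \<subseteq> range (\<lambda>v. P *v v)"
    proof (rule subsetI)
      fix x assume "x \<in> ?E"
      hence "P *v x = x" by (rule EP)
      thus "x \<in> range (\<lambda>v. P *v v)" by (metis rangeI)
    qed
  qed
  have sub: "subspace ?E"
    unfolding subspace_def
    by (simp add: matrix_vector_right_distrib mvs scaleR_right_distrib)
  have eig: "A *v v = (-a) *\<^sub>R v" if l: "l < 0" and ev: "(A + B) *v v = l *\<^sub>R v" for v l
  proof -
    define u where "u = A *v v + a *\<^sub>R v"
    have Bv: "B *v v = l *\<^sub>R v - A *v v" using ev by (simp add: matrix_vector_mult_add_rdistrib algebra_simps)
    have Au: "A *v u = a *\<^sub>R u" unfolding u_def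
      by (simp add: matrix_vector_right_distrib mvs AAv power2_eq_square scaleR_right_distrib add.commute)
    have Bu: "B *v u = (l - a) *\<^sub>R u"
    proof -
      have "B *v u = A *v (B *v v) + a *\<^sub>R (B *v v)"
        unfolding u_def by (simp add: matrix_vector_right_distrib mvs ABv)
      also have "\<dots> = (l - a) *\<^sub>R u" unfolding Bv u_def matrix_vector_mult_diff_distrib mvs AAv
        by (simp only: vec_eq_iff vector_scaleR_component vector_minus_component vector_add_component)
         (simp add: scaleR_conv_of_real field_simps power2_eq_square)
      finally show ?thesis .
    qed
    have "B *v (B *v u) = ((l - a)^2) *\<^sub>R u" by (simp add: Bu mvs power2_eq_square)
    hence "((l - a)^2 - b^2) *\<^sub>R u = 0" by (auto simp: BBv scaleR_left_diff_distrib)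
    moreover have "(l - a)^2 - b^2 \<noteq> 0"
    proof -
      have "b^2 < (l - a)^2" using l ab b0 by (intro power_strict_mono[of b "a - l" 2, simplified power2_commute[of a l] ]) (auto simp: power2_commute)
      thus ?thesis by simp
    qed
    ultimately have "u = 0" by simp
    thus ?thesis unfolding u_def by (simp add: eq_neg_iff_add_eq_0)
  qed
  have nE: "neg_space (A + B) = ?E"
  proof
    show "neg_space (A + B) \<subseteq> ?E" unfolding neg_space_def
      by (rule span_minimal[OF _ sub]) (use eig in \<open>force simp: ofr_s\<close>)
    show "?E \<subseteq> neg_space (A + B)"
    proof
      fix v assume vE: "v \<in> ?E"
      hence Av: "A *v v = (-a) *\<^sub>R v" by simp
      show "v \<in> neg_space (A + B)"
      proof (cases "b = 0")
        case True
        hence e: "(A + B) *v v = complex_of_real (-a) *s v" using bz Av by (simp add: ofr_s)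
        have "-a < 0" using a0 by simp
        hence "v \<in> {v. \<exists>l::real. l < 0 \<and> (A + B) *v v = complex_of_real l *s v}" using e by blast
        thus ?thesis unfolding neg_space_def by (rule span_base)
      next
        case False
        hence bp: "b > 0" using b0 by simp
        define vp where "vp = (1/2) *\<^sub>R (v + (1/b) *\<^sub>R (B *v v))"
        define vm where "vm = (1/2) *\<^sub>R (v - (1/b) *\<^sub>R (B *v v))"
        have e1: "(A + B) *v vp = complex_of_real (-a + b) *s vp"
          unfolding ofr_s vp_def matrix_vector_mult_add_rdistrib matrix_vector_right_distrib mvs ABv Av BBv
          using bp by (simp only: vec_eq_iff vector_scaleR_component vector_minus_component vector_add_component)
           (simp add: scaleR_conv_of_real field_simps power2_eq_square)
        have "-a+b < 0" using ab by simp
        hence "vp \<in> {v. \<exists>l::real. l < 0 \<and> (A + B) *v v = complex_of_real l *s v}" using e1 by blast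
        hence 1: "vp \<in> neg_space (A + B)" unfolding neg_space_def by (rule span_base)
        have e2: "(A + B) *v vm = complex_of_real (-a - b) *s vm"
          unfolding ofr_s vm_def matrix_vector_mult_add_rdistrib matrix_vector_mult_diff_distrib mvs ABv Av BBv
          using bp by (simp only: vec_eq_iff vector_scaleR_component vector_minus_component vector_add_component)
           (simp add: scaleR_conv_of_real field_simps power2_eq_square)
        have "-a-b < 0" using a0 bp by simp
        hence "vm \<in> {v. \<exists>l::real. l < 0 \<and> (A + B) *v v = complex_of_real l *s v}" using e2 by blast
        hence 2: "vm \<in> neg_space (A + B)" unfolding neg_space_def by (rule span_base)
        have "vp + vm = ((1/2) + (1/2)) *\<^sub>R v" unfolding vp_def vm_def scaleR_add_left
          by (simp add: scaleR_right_distrib scaleR_right_diff_distrib)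
        hence vv: "v = vp + vm" by simp
        have "vp + vm \<in> neg_space (A + B)" using 1 2 unfolding neg_space_def by (rule span_add)
        thus ?thesis using vv by simp
      qed
    qed
  qed
  have rr: "range (\<lambda>v. P *v v) = neg_space (A + B)" using rP nE by (rule trans[OF _ sym])
  have "neg_proj (A + B) = P" unfolding neg_proj_def
  proof (rule the_equality)
    show "P ** P = P \<and> hermitian P \<and> range (\<lambda>v. P *v v) = neg_space (A + B)"
      by (intro conjI PP hP rr)
    fix Q assume q: "Q ** Q = Q \<and> hermitian Q \<and> range (\<lambda>v. Q *v v) = neg_space (A + B)"
    have "range (\<lambda>v. Q *v v) = range (\<lambda>v. P *v v)" using q[THEN conjunct2, THEN conjunct2] rr by simp
    thus "Q = P" using proj_unique[of Q P] PP hP q by simp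
  qed
  thus ?thesis by (simp add: P_def)
qed


lemma mm_scaleR: "((a::real) *\<^sub>R (M::complex^'n^'n)) ** ((b::real) *\<^sub>R N) = (a*b) *\<^sub>R (M ** N)"
  unfolding vec_eq_iff matrix_matrix_mult_def vector_scaleR_component
  by (simp add: scaleR_conv_of_real sum_distrib_left mult_ac)

lemma mm_add_l: "((M::complex^'n^'n) + N) ** K = M ** K + N ** K"
  unfolding vec_eq_iff matrix_matrix_mult_def by (simp add: sum.distrib distrib_right)
lemma mm_add_r: "K ** ((M::complex^'n^'n) + N) = K ** M + K ** N"
  unfolding vec_eq_iff matrix_matrix_mult_def by (simp add: sum.distrib distrib_left)
lemma mm_diff_l: "((M::complex^'n^'n) - N) ** K = M ** K - N ** K"
  unfolding vec_eq_iff matrix_matrix_mult_def by (simp add: sum_subtractf left_diff_distrib)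
lemma mm_diff_r: "K ** ((M::complex^'n^'n) - N) = K ** M - K ** N"
  unfolding vec_eq_iff matrix_matrix_mult_def by (simp add: sum_subtractf right_diff_distrib)

lemma det_scal_I: "c \<noteq> 0 \<Longrightarrow> det ((c::real) *\<^sub>R (mat 1 :: complex^'n^'n)) \<noteq> 0"
  by (subst det_diagonal) (auto simp: mat_def)

lemma det_AB_nz:
  fixes A B :: "complex^'n^'n"
  assumes comm: "A ** B = B ** A"
    and AA: "A ** A = (a^2) *\<^sub>R mat 1" and BB: "B ** B = (b^2) *\<^sub>R mat 1"
    and ne: "a^2 \<noteq> b^2"
  shows "det (A + B) \<noteq> 0"
proof -
  have "(A + B) ** (A - B) = (a^2 - b^2) *\<^sub>R mat 1"
    by (simp add: mm_add_l mm_diff_r AA BB comm scaleR_left_diff_distrib)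
  hence "det (A + B) * det (A - B) \<noteq> 0" using det_scal_I[of "a^2 - b^2"] ne
    by (simp add: det_mul[symmetric])
  thus ?thesis by auto
qed

lemma det_AB_eq:
  fixes A B :: "complex^'n^'n"
  assumes comm: "A ** B = B ** A"
    and AA: "A ** A = (a^2) *\<^sub>R mat 1" and BB: "B ** B = (b^2) *\<^sub>R mat 1"
    and eq: "a^2 = b^2" and nz: "det (A + B) \<noteq> 0"
  shows "A = B"
proof -
  have z: "(A + B) ** (A - B) = 0"
    using eq by (simp add: mm_add_l mm_diff_r AA BB comm)
  obtain C where C: "C ** (A + B) = mat 1"
    using nz invertible_det_nz[of "A + B"] unfolding invertible_def by blast
  have "A - B = C ** ((A + B) ** (A - B))"
    by (simp only: matrix_mul_assoc C matrix_mul_lid)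
  also have "\<dots> = 0" using z by (simp add: vec_eq_iff matrix_matrix_mult_def)
  finally show ?thesis by simp
qed

lemma vS_sq: "vS u ** vS u = ((norm u)^2) *\<^sub>R mat 1"
proof -
  have "vS 0 = 0" by (simp add: vS_def)
  moreover have "cs \<i> 0 = (0::complex^4^4)" by (simp add: cs_def vec_eq_iff)
  ultimately show ?thesis by (simp add: vS_vS power2_norm_eq_inner)
qed

lemma vT_sq: "vT u ** vT u = ((norm u)^2) *\<^sub>R mat 1"
proof -
  have "vT 0 = 0" by (simp add: vT_def)
  moreover have "cs \<i> 0 = (0::complex^4^4)" by (simp add: cs_def vec_eq_iff)
  ultimately show ?thesis by (simp add: vT_vT power2_norm_eq_inner)
qed

lemma herm_comb: "hermitian M \<Longrightarrow> hermitian N \<Longrightarrow> hermitian ((a::real) *\<^sub>R M + (b::real) *\<^sub>R (N::complex^'n^'n))"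
  unfolding hermitian_def cadj_def vec_eq_iff
  by (simp add: vec_eq_iff)


lemma fd_eq: "(f has_derivative f') (at x) \<Longrightarrow> frechet_derivative f (at x) = f'"
  by (rule sym, rule frechet_derivative_at)

lemma smooth_diff_at: "smooth f \<Longrightarrow> f differentiable (at x)"
  by (erule smooth.cases) auto

lemma smooth_hasd: "smooth f \<Longrightarrow> (f has_derivative frechet_derivative f (at x)) (at x)"
  using smooth_diff_at frechet_derivative_works by blast

lemma smooth_deriv: "smooth f \<Longrightarrow> smooth (\<lambda>x. frechet_derivative f (at x) v)"
  by (erule smooth.cases) auto

lemma smooth_const: "smooth (\<lambda>x::'a::euclidean_space. c::'b::real_normed_vector)"
proof (coinduction arbitrary: c rule: smooth.coinduct)
  case smooth
  have d: "frechet_derivative (\<lambda>x::'a. c) (at x) = (\<lambda>h. 0)" for x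
    by (rule fd_eq) (rule has_derivative_const)
  show ?case using d by (auto intro: differentiableI has_derivative_const)
qed

lemma smooth_linear: "bounded_linear L \<Longrightarrow> smooth (L :: 'a::euclidean_space \<Rightarrow> 'b::real_normed_vector)"
proof (rule smoothI)
  assume L: "bounded_linear L"
  have d: "frechet_derivative L (at x) = L" for x
    using L by (intro fd_eq) (rule bounded_linear.has_derivative[OF L has_derivative_ident])
  show "\<forall>x. L differentiable at x" using L by (auto intro: bounded_linear_imp_differentiable)
  show "\<forall>v. smooth (\<lambda>x. frechet_derivative L (at x) v)" by (simp add: d smooth_const)
qed

lemma smooth_post:
  fixes f :: "'a::euclidean_space \<Rightarrow> 'b::real_normed_vector" and L :: "'b \<Rightarrow> 'c::real_normed_vector"
  assumes "smooth f" "bounded_linear L"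
  shows "smooth (\<lambda>x. L (f x))"
using assms
proof (coinduction arbitrary: f L rule: smooth.coinduct)
  case smooth
    note f = smooth(1) and L = smooth(2)
    let ?g = "(\<lambda>x. L (f x))"
    have hd: "(?g has_derivative (\<lambda>h. L (frechet_derivative f (at x) h))) (at x)" for x
      by (rule bounded_linear.has_derivative[OF L smooth_hasd[OF f]])
    hence d: "frechet_derivative ?g (at x) = (\<lambda>h. L (frechet_derivative f (at x) h))" for x
      by (rule fd_eq)
    have "\<forall>x. ?g differentiable at x" using hd by (auto intro: differentiableI)
    moreover have "\<forall>v. (\<exists>(f'::'a\<Rightarrow>'b) (L'::'b\<Rightarrow>'c). smooth f' \<and> bounded_linear L' \<and>
       (\<lambda>x. frechet_derivative ?g (at x) v) = (\<lambda>x. L' (f' x)))"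
    proof
      fix v show "\<exists>(f'::'a\<Rightarrow>'b) (L'::'b\<Rightarrow>'c). smooth f' \<and> bounded_linear L' \<and>
       (\<lambda>x. frechet_derivative ?g (at x) v) = (\<lambda>x. L' (f' x))"
        by (rule exI[of _ "\<lambda>x. frechet_derivative f (at x) v"], rule exI[of _ L]) (simp add: d L smooth_deriv[OF f])
    qed
    ultimately show ?case by blast
qed

lemma smooth_pre:
  fixes f :: "'c::euclidean_space \<Rightarrow> 'b::real_normed_vector"
  assumes "smooth f" "bounded_linear (L :: 'a::euclidean_space \<Rightarrow> 'c::euclidean_space)"
  shows "smooth (\<lambda>x. f (L x))"
using assms
proof (coinduction arbitrary: f L rule: smooth.coinduct)
  case smooth
    note f = smooth(1) and L = smooth(2)
    let ?g = "(\<lambda>x. f (L x))"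
    have hd: "(?g has_derivative (\<lambda>h. frechet_derivative f (at (L x)) (L h))) (at x)" for x
      by (rule diff_chain_at[OF bounded_linear.has_derivative[OF L has_derivative_ident] smooth_hasd[OF f], unfolded o_def])
    hence d: "frechet_derivative ?g (at x) = (\<lambda>h. frechet_derivative f (at (L x)) (L h))" for x
      by (rule fd_eq)
    have "\<forall>x. ?g differentiable at x" using hd by (auto intro: differentiableI)
    moreover have "\<forall>v. (\<exists>(f'::'c\<Rightarrow>'b) (L'::'a\<Rightarrow>'c). smooth f' \<and> bounded_linear L' \<and>
       (\<lambda>x. frechet_derivative ?g (at x) v) = (\<lambda>x. f' (L' x)))"
    proof
      fix v show "\<exists>(f'::'c\<Rightarrow>'b) (L'::'a\<Rightarrow>'c). smooth f' \<and> bounded_linear L' \<and>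
       (\<lambda>x. frechet_derivative ?g (at x) v) = (\<lambda>x. f' (L' x))"
        by (rule exI[of _ "\<lambda>y. frechet_derivative f (at y) (L v)"], rule exI[of _ L]) (simp add: d L smooth_deriv[OF f])
    qed
    ultimately show ?case by blast
qed

lemma smooth_add:
  fixes f g :: "'a::euclidean_space \<Rightarrow> 'b::real_normed_vector"
  assumes "smooth f" "smooth g"
  shows "smooth (\<lambda>x. f x + g x)"
using assms
proof (coinduction arbitrary: f g rule: smooth.coinduct)
  case smooth
    note f = smooth(1) and g = smooth(2)
    let ?k = "(\<lambda>x. f x + g x)"
    have hd: "(?k has_derivative (\<lambda>h. frechet_derivative f (at x) h + frechet_derivative g (at x) h)) (at x)" for x
      by (rule has_derivative_add[OF smooth_hasd[OF f] smooth_hasd[OF g]])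
    hence d: "frechet_derivative ?k (at x) = (\<lambda>h. frechet_derivative f (at x) h + frechet_derivative g (at x) h)" for x
      by (rule fd_eq)
    have "\<forall>x. ?k differentiable at x" using hd by (auto intro: differentiableI)
    moreover have "\<forall>v. (\<exists>(f'::'a\<Rightarrow>'b) (g'::'a\<Rightarrow>'b). smooth f' \<and> smooth g' \<and>
       (\<lambda>x. frechet_derivative ?k (at x) v) = (\<lambda>x. f' x + g' x))"
    proof
      fix v show "\<exists>(f'::'a\<Rightarrow>'b) (g'::'a\<Rightarrow>'b). smooth f' \<and> smooth g' \<and>
       (\<lambda>x. frechet_derivative ?k (at x) v) = (\<lambda>x. f' x + g' x)"
        by (rule exI[of _ "\<lambda>x. frechet_derivative f (at x) v"], rule exI[of _ "\<lambda>x. frechet_derivative g (at x) v"])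
          (simp add: d smooth_deriv[OF f] smooth_deriv[OF g])
    qed
    ultimately show ?case by blast
qed

inductive BP for pr :: "'b::real_normed_vector \<Rightarrow> 'c::real_normed_vector \<Rightarrow> 'd::real_normed_vector" where
  base: "smooth f \<Longrightarrow> smooth g \<Longrightarrow> BP pr (\<lambda>x::'a::euclidean_space. pr (f x) (g x))"
| add: "BP pr h1 \<Longrightarrow> BP pr h2 \<Longrightarrow> BP pr (\<lambda>x. h1 x + h2 x)"

lemma BP_deriv:
  assumes bb: "bounded_bilinear pr"
  shows "BP pr h \<Longrightarrow> (\<forall>x. h differentiable at x) \<and> (\<forall>v. BP pr (\<lambda>x. frechet_derivative h (at x) v))"
proof (induction rule: BP.induct)
  case (base f g)
  have hd: "((\<lambda>x. pr (f x) (g x)) has_derivative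
      (\<lambda>h. pr (f x) (frechet_derivative g (at x) h) + pr (frechet_derivative f (at x) h) (g x))) (at x)" for x
    by (rule bounded_bilinear.FDERIV[OF bb smooth_hasd[OF base(1)] smooth_hasd[OF base(2)]])
  have "\<forall>x. (\<lambda>x. pr (f x) (g x)) differentiable at x" using hd by (auto intro: differentiableI)
  moreover have "BP pr (\<lambda>x. frechet_derivative (\<lambda>x. pr (f x) (g x)) (at x) v)" for v
  proof -
    have "BP pr (\<lambda>x. pr (f x) (frechet_derivative g (at x) v) + pr (frechet_derivative f (at x) v) (g x))"
      by (intro BP.add BP.base base smooth_deriv)
    thus ?thesis using fd_eq[OF hd] by simp
  qed
  ultimately show ?case by blast
next
  case (add h1 h2)
  have hd: "((\<lambda>x. h1 x + h2 x) has_derivative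
      (\<lambda>h. frechet_derivative h1 (at x) h + frechet_derivative h2 (at x) h)) (at x)" for x
    using add.IH by (intro has_derivative_add) (auto simp: frechet_derivative_works)
  have "\<forall>x. (\<lambda>x. h1 x + h2 x) differentiable at x" using hd by (auto intro: differentiableI)
  moreover have "BP pr (\<lambda>x. frechet_derivative (\<lambda>x. h1 x + h2 x) (at x) v)" for v
    using add.IH fd_eq[OF hd] by (simp add: BP.add)
  ultimately show ?case by blast
qed

lemma smooth_BP: "bounded_bilinear pr \<Longrightarrow> BP pr h \<Longrightarrow> smooth h"
proof -
  assume bb: "bounded_bilinear pr" and "BP pr h"
  thus "smooth h"
  proof (coinduction arbitrary: h rule: smooth.coinduct)
    case smooth
    thus ?case using BP_deriv[OF bb] by blast
  qed
qed

lemma smooth_bilinear: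
  "bounded_bilinear pr \<Longrightarrow> smooth f \<Longrightarrow> smooth g \<Longrightarrow> smooth (\<lambda>x. pr (f x) (g x))"
  by (rule smooth_BP) (auto intro: BP.base)

lemma smooth_mult: "smooth f \<Longrightarrow> smooth g \<Longrightarrow> smooth (\<lambda>x. (f x :: real) * g x)"
  by (rule smooth_bilinear[OF bounded_bilinear_mult])

lemma smooth_scaleR: "smooth f \<Longrightarrow> smooth g \<Longrightarrow> smooth (\<lambda>x. f x *\<^sub>R g x)"
  by (rule smooth_bilinear[OF bounded_bilinear_scaleR])

lemma smooth_inner: "smooth f \<Longrightarrow> smooth g \<Longrightarrow> smooth (\<lambda>x. f x \<bullet> g x)"
  by (rule smooth_bilinear[OF bounded_bilinear_inner])

lemma smooth_minus: "smooth f \<Longrightarrow> smooth (\<lambda>x. - f x)"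
  using smooth_post[OF _ bounded_linear_minus[OF bounded_linear_ident]] by auto

lemma smooth_diff: "smooth f \<Longrightarrow> smooth g \<Longrightarrow> smooth (\<lambda>x. f x - g x)"
  using smooth_add[OF _ smooth_minus[of g]] by simp


inductive PW for q :: "'a::euclidean_space \<Rightarrow> real" where
  base: "smooth f \<Longrightarrow> PW q (\<lambda>x. (q x) powr r * f x)"
| add: "PW q h1 \<Longrightarrow> PW q h2 \<Longrightarrow> PW q (\<lambda>x. h1 x + h2 x)"

lemma PW_deriv:
  fixes q :: "'a::euclidean_space \<Rightarrow> real"
  assumes sq: "smooth q" and qp: "\<And>x. q x > 0"
  shows "PW q h \<Longrightarrow> (\<forall>x. h differentiable at x) \<and> (\<forall>v. PW q (\<lambda>x. frechet_derivative h (at x) v))"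
proof (induction rule: PW.induct)
  case (base f r)
  let ?q' = "\<lambda>x. frechet_derivative q (at x)"
  let ?f' = "\<lambda>x. frechet_derivative f (at x)"
  have dp: "((\<lambda>x. q x powr r) has_derivative (\<lambda>h. r * q x powr (r - 1) * ?q' x h)) (at x)" for x
  proof -
    have "((\<lambda>s. s powr r) has_derivative (\<lambda>h. r * q x powr (r - 1) * h)) (at (q x))"
      using has_real_derivative_powr[OF qp[of x], of r] has_field_derivative_imp_has_derivative by blast
    from diff_chain_at[OF smooth_hasd[OF sq] this] show ?thesis by (simp add: o_def)
  qed
  have hd: "((\<lambda>x. q x powr r * f x) has_derivative
      (\<lambda>h. q x powr r * ?f' x h + r * q x powr (r - 1) * ?q' x h * f x)) (at x)" for x
    by (rule has_derivative_mult[OF dp smooth_hasd[OF base]])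
  have "\<forall>x. (\<lambda>x. q x powr r * f x) differentiable at x" using hd by (auto intro: differentiableI)
  moreover have "PW q (\<lambda>x. frechet_derivative (\<lambda>x. q x powr r * f x) (at x) v)" for v
  proof -
    have s2: "smooth (\<lambda>x. r * ?q' x v * f x)"
      by (intro smooth_mult smooth_const smooth_deriv sq base)
    have "PW q (\<lambda>x. q x powr r * ?f' x v + q x powr (r - 1) * (r * ?q' x v * f x))"
      by (intro PW.add PW.base smooth_deriv base s2)
    thus ?thesis using fd_eq[OF hd] by (simp add: mult_ac)
  qed
  ultimately show ?case by blast
next
  case (add h1 h2)
  have hd: "((\<lambda>x. h1 x + h2 x) has_derivative
      (\<lambda>h. frechet_derivative h1 (at x) h + frechet_derivative h2 (at x) h)) (at x)" for x
    using add.IH by (intro has_derivative_add) (auto simp: frechet_derivative_works)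
  have "\<forall>x. (\<lambda>x. h1 x + h2 x) differentiable at x" using hd by (auto intro: differentiableI)
  moreover have "PW q (\<lambda>x. frechet_derivative (\<lambda>x. h1 x + h2 x) (at x) v)" for v
    using add.IH fd_eq[OF hd] by (simp add: PW.add)
  ultimately show ?case by blast
qed


lemma smooth_PW:
  fixes q :: "'a::euclidean_space \<Rightarrow> real"
  assumes sq: "smooth q" and qp: "\<And>x. q x > 0"
  shows "PW q h \<Longrightarrow> smooth h"
proof (coinduction arbitrary: h rule: smooth.coinduct)
  case smooth
  thus ?case using PW_deriv[OF sq qp] by blast
qed

lemma smooth_powr:
  fixes q :: "'a::euclidean_space \<Rightarrow> real"
  assumes sq: "smooth q" and qp: "\<And>x. q x > 0"
  shows "smooth (\<lambda>x. q x powr r)"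
proof -
  have "PW q (\<lambda>x. q x powr r * (\<lambda>x. 1) x)" by (intro PW.base smooth_const)
  thus ?thesis using smooth_PW[OF sq qp] by simp
qed


lemma powr_half_inv: "(a::real) > 0 \<Longrightarrow> (a * a) powr (-1/2) = 1 / a"
proof -
  assume a: "a > 0"
  have "(a * a) powr (-1/2) = (a powr 2) powr (-1/2)" using a by (simp add: powr_def ln_mult power2_eq_square)
  also have "\<dots> = a powr (-1)" by (simp add: powr_powr)
  finally show ?thesis using a by (simp add: powr_minus_divide)
qed

lemma smooth_inv_norm:
  fixes x :: "'a::euclidean_space \<Rightarrow> real^3"
  assumes sx: "smooth x" and nz: "\<And>k. x k \<noteq> 0"
  shows "smooth (\<lambda>k. 1 / norm (x k))"
proof -
  have "smooth (\<lambda>k. (x k \<bullet> x k) powr (-1/2))"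
    using nz by (intro smooth_powr smooth_inner sx) auto
  moreover have "(\<lambda>k. (x k \<bullet> x k) powr (-1/2)) = (\<lambda>k. 1 / norm (x k))"
  proof
    fix k have "x k \<bullet> x k = norm (x k) * norm (x k)" by (simp add: norm_eq_sqrt_inner)
    thus "(x k \<bullet> x k) powr (-1/2) = 1 / norm (x k)" using nz[of k] powr_half_inv[of "norm (x k)"] by simp
  qed
  ultimately show ?thesis by simp
qed

lemma homotopy_generic:
  fixes x y :: "real \<times> real \<Rightarrow> real^3" and VA VB :: "real^3 \<Rightarrow> complex^4^4"
  assumes sx: "smooth x" and sy: "smooth y" and px: "periodic2 x" and py: "periodic2 y"
    and gt: "\<And>k. norm (y k) < norm (x k)"
    and lA: "bounded_linear VA" and lB: "bounded_linear VB"
    and hA: "\<And>u. hermitian (VA u)" and hB: "\<And>u. hermitian (VB u)"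
    and AA: "\<And>u. VA u ** VA u = ((norm u)^2) *\<^sub>R mat 1"
    and BB: "\<And>u. VB u ** VB u = ((norm u)^2) *\<^sub>R mat 1"
    and AB: "\<And>u w. VA u ** VB w = VB w ** VA u"
  shows "\<exists>G :: real \<Rightarrow> real \<times> real \<Rightarrow> complex^4^4.
            smooth (\<lambda>z. G (fst z) (snd z))
          \<and> (\<forall>t\<in>{0..1}. periodic2 (G t) \<and> (\<forall>k. hermitian (G t k) \<and> det (G t k) \<noteq> 0))
          \<and> G 0 = (\<lambda>k. VA (x k) + VB (y k))
          \<and> G 1 = (\<lambda>k. (1 / norm (x k)) *\<^sub>R VA (x k))"
proof -
  define r where "r k = 1 / norm (x k)" for k
  define G where "G t k = (1 - t + t * r k) *\<^sub>R VA (x k) + ((1 - t) * (1 - t + t * r k)) *\<^sub>R VB (y k)" for t k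
  have nz: "x k \<noteq> 0" for k using gt[of k] by auto
  have rp: "r k > 0" for k using nz[of k] by (simp add: r_def)
  have ssnd: "smooth (\<lambda>z::real \<times> (real \<times> real). snd z)" by (rule smooth_linear) (rule bounded_linear_snd)
  have sfst: "smooth (\<lambda>z::real \<times> (real \<times> real). fst z)" by (rule smooth_linear) (rule bounded_linear_fst)
  have sxs: "smooth (\<lambda>z::real \<times> (real \<times> real). x (snd z))" by (rule smooth_pre[OF sx bounded_linear_snd])
  have sys: "smooth (\<lambda>z::real \<times> (real \<times> real). y (snd z))" by (rule smooth_pre[OF sy bounded_linear_snd])
  have srs: "smooth (\<lambda>z::real \<times> (real \<times> real). r (snd z))"
    unfolding r_def using nz by (intro smooth_inv_norm sxs) auto
  have sal: "smooth (\<lambda>z::real \<times> (real \<times> real). 1 - fst z + fst z * r (snd z))"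
    by (intro smooth_add smooth_diff smooth_mult smooth_const sfst srs)
  have "smooth (\<lambda>z::real \<times> (real \<times> real). (1 - fst z + fst z * r (snd z)) *\<^sub>R VA (x (snd z))
        + ((1 - fst z) * (1 - fst z + fst z * r (snd z))) *\<^sub>R VB (y (snd z)))"
    by (intro smooth_add smooth_scaleR smooth_mult smooth_diff smooth_const sfst sal
        smooth_post[OF sxs lA] smooth_post[OF sys lB])
  hence sG: "smooth (\<lambda>z. G (fst z) (snd z))" by (simp add: G_def)
  have per: "periodic2 (G t)" for t
    using px py unfolding periodic2_def G_def r_def by simp
  have herm: "hermitian (G t k)" for t k
    unfolding G_def by (intro herm_comb hA hB)
  have det: "det (G t k) \<noteq> 0" if t: "t \<in> {0..1}" for t k
  proof -
    define al where "al = 1 - t + t * r k"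
    define be where "be = (1 - t) * al"
    have alp: "al > 0"
    proof (cases "t = 1")
      case True thus ?thesis using rp[of k] by (simp add: al_def)
    next
      case False
      hence "1 - t > 0" using t by auto
      moreover have "t * r k \<ge> 0" using t rp[of k] by auto
      ultimately show ?thesis by (simp add: al_def)
    qed
    have be0: "be \<ge> 0" using alp t by (simp add: be_def)
    have "be * norm (y k) \<le> al * norm (y k)" using t alp by (intro mult_right_mono) (auto simp: be_def)
    also have "\<dots> < al * norm (x k)" using alp gt[of k] by simp
    finally have lt: "be * norm (y k) < al * norm (x k)" .
    have ne: "(al * norm (x k))^2 \<noteq> (be * norm (y k))^2"
    proof
      assume "(al * norm (x k))^2 = (be * norm (y k))^2"
      hence "al * norm (x k) = be * norm (y k)" using alp be0
        by (subst (asm) power2_eq_iff_nonneg) auto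
      thus False using lt by simp
    qed
    have "det (al *\<^sub>R VA (x k) + be *\<^sub>R VB (y k)) \<noteq> 0"
      by (rule det_AB_nz[OF _ _ _ ne]) (simp_all add: mm_scaleR AA BB AB power_mult_distrib mult_ac power2_eq_square)
    thus ?thesis by (simp add: G_def al_def be_def)
  qed
  have G0: "G 0 = (\<lambda>k. VA (x k) + VB (y k))" by (simp add: G_def fun_eq_iff)
  have G1: "G 1 = (\<lambda>k. (1 / norm (x k)) *\<^sub>R VA (x k))" by (simp add: G_def fun_eq_iff r_def)
  show ?thesis using sG per herm det G0 G1 by blast
qed


lemma tr_S: "trace (((1/2) *\<^sub>R (mat 1 - vS n)) ** ((- ((1/2) *\<^sub>R vS X)) ** (- ((1/2) *\<^sub>R vS Y))
    - (- ((1/2) *\<^sub>R vS Y)) ** (- ((1/2) *\<^sub>R vS X))))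
  = - \<i> * complex_of_real (n \<bullet> cross3 X Y)"
  unfolding trace_def sum_4 matrix_matrix_mult_def
  by (simp add: ent_simps sum_4 inner_vec_def sum_3 cross3_simps mat_def complex_eq_iff algebra_simps)

lemma tr_T: "trace (((1/2) *\<^sub>R (mat 1 - vT n)) ** ((- ((1/2) *\<^sub>R vT X)) ** (- ((1/2) *\<^sub>R vT Y))
    - (- ((1/2) *\<^sub>R vT Y)) ** (- ((1/2) *\<^sub>R vT X))))
  = - \<i> * complex_of_real (n \<bullet> cross3 X Y)"
  unfolding trace_def sum_4 matrix_matrix_mult_def
  by (simp add: ent_simps sum_4 inner_vec_def sum_3 cross3_simps mat_def complex_eq_iff algebra_simps)

lemma lin_test: "bounded_linear f \<Longrightarrow> f (c *\<^sub>R x) = c *\<^sub>R f x"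
  by (rule linear_scale[OF bounded_linear.linear])

lemma int_of_real: "integral S (\<lambda>k. complex_of_real (g k)) = complex_of_real (integral S g)"
proof (cases "g integrable_on S")
  case True
  show ?thesis using integral_linear[OF True bounded_linear_of_real] by (simp add: o_def)
next
  case False
  have "\<not> (\<lambda>k. complex_of_real (g k)) integrable_on S"
  proof
    assume "(\<lambda>k. complex_of_real (g k)) integrable_on S"
    from integrable_linear[OF this bounded_linear_Re] have "g integrable_on S" by (simp add: o_def)
    thus False using False by simp
  qed
  thus ?thesis using False by (simp add: not_integrable_integral)
qed


lemma chern_generic:
  fixes x y :: "real \<times> real \<Rightarrow> real^3" and VA VB :: "real^3 \<Rightarrow> complex^4^4"
    and H :: "real \<times> real \<Rightarrow> complex^4^4"
  assumes sx: "smooth x" and gt: "\<And>k. norm (y k) < norm (x k)"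
    and lA: "bounded_linear VA" and lB: "bounded_linear VB"
    and hA: "\<And>u. hermitian (VA u)"
    and AA: "\<And>u. VA u ** VA u = ((norm u)^2) *\<^sub>R mat 1"
    and BB: "\<And>u. VB u ** VB u = ((norm u)^2) *\<^sub>R mat 1"
    and AB: "\<And>u w. VA u ** VB w = VB w ** VA u"
    and tr: "\<And>n X Y. trace (((1/2) *\<^sub>R (mat 1 - VA n)) ** ((- ((1/2) *\<^sub>R VA X)) ** (- ((1/2) *\<^sub>R VA Y))
    - (- ((1/2) *\<^sub>R VA Y)) ** (- ((1/2) *\<^sub>R VA X)))) = - \<i> * complex_of_real (n \<bullet> cross3 X Y)"
    and Hk: "\<And>k. H k = VA (x k) + VB (y k)"
  shows "occupied_chern H = complex_of_real (2 * degree_S2 (\<lambda>k. (1 / norm (x k)) *\<^sub>R x k))"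
proof -
  define n where "n k = (1 / norm (x k)) *\<^sub>R x k" for k
  have nz: "x k \<noteq> 0" for k using gt[of k] by auto
  have sn: "smooth n" unfolding n_def using nz by (intro smooth_scaleR smooth_inv_norm sx) auto
  define Pf where "Pf u = (1/2) *\<^sub>R (mat 1 - VA u)" for u
  have NP: "neg_proj (H k) = Pf (n k)" for k
  proof -
    have "neg_proj (VA (x k) + VB (y k)) = (1/2) *\<^sub>R (mat 1 - (1 / norm (x k)) *\<^sub>R VA (x k))"
    proof (rule neg_proj_AB[OF hA AB AA BB norm_ge_zero gt])
      assume "norm (y k) = 0"
      thus "VB (y k) = 0" using linear_0[OF bounded_linear.linear[OF lB]] by simp
    qed
    thus ?thesis unfolding Hk Pf_def n_def linear_scale[OF bounded_linear.linear[OF lA]] .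
  qed
  have dP: "frechet_derivative (\<lambda>k. neg_proj (H k)) (at k) = (\<lambda>h. - ((1/2) *\<^sub>R VA (frechet_derivative n (at k) h)))" for k
  proof -
    have bl: "bounded_linear (\<lambda>u. (1/2) *\<^sub>R VA u)"
      by (rule bounded_linear_compose[OF bounded_linear_scaleR_right lA])
    have "((\<lambda>k. (1/2) *\<^sub>R mat 1 - (1/2) *\<^sub>R VA (n k)) has_derivative
        (\<lambda>h. 0 - (1/2) *\<^sub>R VA (frechet_derivative n (at k) h))) (at k)"
      by (intro has_derivative_diff has_derivative_const bounded_linear.has_derivative[OF bl smooth_hasd[OF sn]])
    hence "((\<lambda>k. neg_proj (H k)) has_derivative
        (\<lambda>h. - ((1/2) *\<^sub>R VA (frechet_derivative n (at k) h)))) (at k)"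
      by (simp add: NP Pf_def scaleR_right_diff_distrib)
    thus ?thesis by (rule fd_eq)
  qed
  define g where "g k = n k \<bullet> cross3 (dx n k) (dy n k)" for k
  have integrand: "trace (neg_proj (H k) ** (dx (\<lambda>k. neg_proj (H k)) k ** dy (\<lambda>k. neg_proj (H k)) k
       - dy (\<lambda>k. neg_proj (H k)) k ** dx (\<lambda>k. neg_proj (H k)) k)) = - \<i> * complex_of_real (g k)" for k
    unfolding dx_def dy_def unfolding dP unfolding NP g_def
    using tr[of "n k"] by (simp add: dx_def dy_def Pf_def)
  have "occupied_chern H = (\<i> / (2 * complex_of_real pi)) * integral unit_square (\<lambda>k. - \<i> * complex_of_real (g k))"
    unfolding occupied_chern_def chern_number_def using integrand by simp
  also have "\<dots> = (\<i> / (2 * complex_of_real pi)) * (- \<i>) * complex_of_real (integral unit_square g)"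
    by (simp add: integral_mult_right int_of_real)
  also have "\<dots> = complex_of_real (2 * ((1 / (4 * pi)) * integral unit_square g))"
    by (simp add: field_simps)
  finally show ?thesis unfolding degree_S2_def g_def n_def .
qed


lemma lin_vS: "bounded_linear vS"
  by (rule linear_conv_bounded_linear[THEN iffD1], rule linearI)
     (simp_all add: vS_def scaleR_add_left scaleR_right_distrib algebra_simps)
lemma lin_vT: "bounded_linear vT"
  by (rule linear_conv_bounded_linear[THEN iffD1], rule linearI)
     (simp_all add: vT_def scaleR_add_left scaleR_right_distrib algebra_simps)

definition L4 :: "real^4 \<Rightarrow> real^3" where "L4 v = vector [v$1, v$2, v$3]"
definition L5 :: "real^4 \<Rightarrow> real^3" where "L5 v = vector [0, 0, v$0]"
definition L6 :: "complex \<Rightarrow> real^3" where "L6 z = vector [Re z, Im z, 0]"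

lemma lin_L4: "bounded_linear L4"
  by (rule linear_conv_bounded_linear[THEN iffD1], rule linearI) (simp_all add: L4_def vec_eq_iff forall_3 v3)
lemma lin_L5: "bounded_linear L5"
  by (rule linear_conv_bounded_linear[THEN iffD1], rule linearI) (simp_all add: L5_def vec_eq_iff forall_3 v3)
lemma lin_L6: "bounded_linear L6"
  by (rule linear_conv_bounded_linear[THEN iffD1], rule linearI) (simp_all add: L6_def vec_eq_iff forall_3 v3)

lemma hvec_L: "hvec h = (\<lambda>k. L4 (h k))" by (simp add: hvec_def L4_def fun_eq_iff)
lemma hvec'_L: "hvec' h D = (\<lambda>k. L5 (h k) + L6 (D k))"
  by (simp add: hvec'_def L5_def L6_def fun_eq_iff vec_eq_iff forall_3 v3)

lemma vT_vS: "vT u ** vS w = vS w ** vT u" by (simp add: vS_vT)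

theorem mainTheorem2:
  fixes h :: "real \<times> real \<Rightarrow> real^4" and D :: "real \<times> real \<Rightarrow> complex"
  assumes h_smooth: "smooth h" and D_smooth: "smooth D"
    and h_per: "periodic2 h" and D_per: "periodic2 D"
    and nonsing: "\<forall>k. det (Hmat h D k) \<noteq> 0"
  shows
    "((\<forall>k. pfun h D k > 0) \<or> (\<forall>k. pfun h D k < 0))
   \<and> ((\<forall>k. pfun h D k > 0) \<longrightarrow>
        (\<exists>G :: real \<Rightarrow> real \<times> real \<Rightarrow> complex^4^4.
            smooth (\<lambda>z. G (fst z) (snd z))
          \<and> (\<forall>t\<in>{0..1}. periodic2 (G t) \<and> (\<forall>k. hermitian (G t k) \<and> det (G t k) \<noteq> 0))
          \<and> G 0 = Hmat h D
          \<and> G 1 = (\<lambda>k. (1 / norm (hvec h k)) *\<^sub>R vS (hvec h k))))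
   \<and> ((\<forall>k. pfun h D k < 0) \<longrightarrow>
        (\<exists>G :: real \<Rightarrow> real \<times> real \<Rightarrow> complex^4^4.
            smooth (\<lambda>z. G (fst z) (snd z))
          \<and> (\<forall>t\<in>{0..1}. periodic2 (G t) \<and> (\<forall>k. hermitian (G t k) \<and> det (G t k) \<noteq> 0))
          \<and> G 0 = Hmat h D
          \<and> G 1 = (\<lambda>k. (1 / norm (hvec' h D k)) *\<^sub>R vT (hvec' h D k))))
   \<and> ((\<forall>k. pfun h D k > 0) \<longrightarrow>
        occupied_chern (Hmat h D) = complex_of_real (2 * degree_S2 (\<lambda>k. (1 / norm (hvec h k)) *\<^sub>R hvec h k))
      \<and> bdg_chern (Hmat h D) = complex_of_real (degree_S2 (\<lambda>k. (1 / norm (hvec h k)) *\<^sub>R hvec h k)))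
   \<and> ((\<forall>k. pfun h D k < 0) \<longrightarrow>
        occupied_chern (Hmat h D) = complex_of_real (2 * degree_S2 (\<lambda>k. (1 / norm (hvec' h D k)) *\<^sub>R hvec' h D k))
      \<and> bdg_chern (Hmat h D) = complex_of_real (degree_S2 (\<lambda>k. (1 / norm (hvec' h D k)) *\<^sub>R hvec' h D k)))"
proof -
  define x where "x = hvec h"
  define y where "y = hvec' h D"
  have sx: "smooth x" unfolding x_def hvec_L by (rule smooth_post[OF h_smooth lin_L4])
  have sy: "smooth y" unfolding y_def hvec'_L
    by (rule smooth_add[OF smooth_post[OF h_smooth lin_L5] smooth_post[OF D_smooth lin_L6]])
  have px: "periodic2 x" using h_per unfolding x_def periodic2_def hvec_def by simp
  have py: "periodic2 y" using h_per D_per unfolding y_def periodic2_def hvec'_def by simp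
  have Hk: "Hmat h D k = vS (x k) + vT (y k)" for k unfolding x_def y_def by (rule Hmat_decomp)
  have Hfun: "(\<lambda>k. vS (x k) + vT (y k)) = Hmat h D" by (simp add: fun_eq_iff Hk)
  have Hfun': "(\<lambda>k. vT (y k) + vS (x k)) = Hmat h D" by (simp add: fun_eq_iff Hk add.commute)
  have pk: "pfun h D k = x k \<bullet> x k - y k \<bullet> y k" for k
    unfolding pfun_def x_def y_def by (simp add: power2_norm_eq_inner)
  have pnz: "pfun h D k \<noteq> 0" for k
  proof
    assume "pfun h D k = 0"
    hence eq: "(norm (x k))^2 = (norm (y k))^2" unfolding pfun_def x_def y_def by simp
    have dk: "det (vS (x k) + vT (y k)) \<noteq> 0" using nonsing Hk by metis
    have "vS (x k) = vT (y k)"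
      using det_AB_eq[OF vS_vT vS_sq vT_sq eq dk] .
    hence "x k = 0 \<and> y k = 0" by (rule vS_vT_eq)
    hence "Hmat h D k = 0" using Hk linear_0[OF bounded_linear.linear[OF lin_vS]]
      linear_0[OF bounded_linear.linear[OF lin_vT]] by simp
    thus False using nonsing det_0 mat_0 by metis
  qed
  have sp: "smooth (pfun h D)" unfolding pk by (intro smooth_diff smooth_inner sx sy)
  have cont: "continuous_on UNIV (pfun h D)"
    using smooth_diff_at[OF sp] by (intro continuous_at_imp_continuous_on) (auto intro: differentiable_imp_continuous_within)
  have part1: "(\<forall>k. pfun h D k > 0) \<or> (\<forall>k. pfun h D k < 0)"
  proof (rule ccontr)
    assume "\<not> ?thesis"
    then obtain a b where a: "pfun h D a \<le> 0" and b: "pfun h D b \<ge> 0" by (auto simp: not_less)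
    have "connected (pfun h D ` UNIV)" by (rule connected_continuous_image[OF cont connected_UNIV])
    hence "0 \<in> pfun h D ` UNIV" using a b unfolding connected_iff_interval by blast
    thus False using pnz by auto
  qed
  have normp: "norm (y k) < norm (x k)" if "\<forall>k. pfun h D k > 0" for k
  proof -
    have "(norm (y k))^2 < (norm (x k))^2" using that[rule_format, of k] unfolding pfun_def x_def y_def by simp
    thus ?thesis using power_less_imp_less_base by fastforce
  qed
  have normn: "norm (x k) < norm (y k)" if "\<forall>k. pfun h D k < 0" for k
  proof -
    have "(norm (x k))^2 < (norm (y k))^2" using that[rule_format, of k] unfolding pfun_def x_def y_def by simp
    thus ?thesis using power_less_imp_less_base by fastforce
  qed
  have part2: "(\<forall>k. pfun h D k > 0) \<longrightarrow>
        (\<exists>G :: real \<Rightarrow> real \<times> real \<Rightarrow> complex^4^4.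
            smooth (\<lambda>z. G (fst z) (snd z))
          \<and> (\<forall>t\<in>{0..1}. periodic2 (G t) \<and> (\<forall>k. hermitian (G t k) \<and> det (G t k) \<noteq> 0))
          \<and> G 0 = Hmat h D
          \<and> G 1 = (\<lambda>k. (1 / norm (hvec h k)) *\<^sub>R vS (hvec h k)))"
  proof
    assume "\<forall>k. pfun h D k > 0"
    from homotopy_generic[OF sx sy px py normp[OF this] lin_vS lin_vT herm_vS herm_vT vS_sq vT_sq vS_vT,
       unfolded Hfun, unfolded x_def]
    show "\<exists>G :: real \<Rightarrow> real \<times> real \<Rightarrow> complex^4^4.
            smooth (\<lambda>z. G (fst z) (snd z))
          \<and> (\<forall>t\<in>{0..1}. periodic2 (G t) \<and> (\<forall>k. hermitian (G t k) \<and> det (G t k) \<noteq> 0))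
          \<and> G 0 = Hmat h D
          \<and> G 1 = (\<lambda>k. (1 / norm (hvec h k)) *\<^sub>R vS (hvec h k))"
      .
  qed
  have part3: "(\<forall>k. pfun h D k < 0) \<longrightarrow>
        (\<exists>G :: real \<Rightarrow> real \<times> real \<Rightarrow> complex^4^4.
            smooth (\<lambda>z. G (fst z) (snd z))
          \<and> (\<forall>t\<in>{0..1}. periodic2 (G t) \<and> (\<forall>k. hermitian (G t k) \<and> det (G t k) \<noteq> 0))
          \<and> G 0 = Hmat h D
          \<and> G 1 = (\<lambda>k. (1 / norm (hvec' h D k)) *\<^sub>R vT (hvec' h D k)))"
  proof
    assume "\<forall>k. pfun h D k < 0"
    from homotopy_generic[OF sy sx py px normn[OF this] lin_vT lin_vS herm_vT herm_vS vT_sq vS_sq vT_vS,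
       unfolded Hfun', unfolded y_def]
    show "\<exists>G :: real \<Rightarrow> real \<times> real \<Rightarrow> complex^4^4.
            smooth (\<lambda>z. G (fst z) (snd z))
          \<and> (\<forall>t\<in>{0..1}. periodic2 (G t) \<and> (\<forall>k. hermitian (G t k) \<and> det (G t k) \<noteq> 0))
          \<and> G 0 = Hmat h D
          \<and> G 1 = (\<lambda>k. (1 / norm (hvec' h D k)) *\<^sub>R vT (hvec' h D k))"
      .
  qed
  have part4: "(\<forall>k. pfun h D k > 0) \<longrightarrow>
        occupied_chern (Hmat h D) = complex_of_real (2 * degree_S2 (\<lambda>k. (1 / norm (hvec h k)) *\<^sub>R hvec h k))
      \<and> bdg_chern (Hmat h D) = complex_of_real (degree_S2 (\<lambda>k. (1 / norm (hvec h k)) *\<^sub>R hvec h k))"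
  proof
    assume "\<forall>k. pfun h D k > 0"
    from chern_generic[OF sx normp[OF this] lin_vS lin_vT herm_vS vS_sq vT_sq vS_vT tr_S Hk]
    have "occupied_chern (Hmat h D) = complex_of_real (2 * degree_S2 (\<lambda>k. (1 / norm (hvec h k)) *\<^sub>R hvec h k))"
      by (simp add: x_def)
    thus "occupied_chern (Hmat h D) = complex_of_real (2 * degree_S2 (\<lambda>k. (1 / norm (hvec h k)) *\<^sub>R hvec h k))
      \<and> bdg_chern (Hmat h D) = complex_of_real (degree_S2 (\<lambda>k. (1 / norm (hvec h k)) *\<^sub>R hvec h k))"
      by (simp add: bdg_chern_def)
  qed
  have part5: "(\<forall>k. pfun h D k < 0) \<longrightarrow>
        occupied_chern (Hmat h D) = complex_of_real (2 * degree_S2 (\<lambda>k. (1 / norm (hvec' h D k)) *\<^sub>R hvec' h D k))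
      \<and> bdg_chern (Hmat h D) = complex_of_real (degree_S2 (\<lambda>k. (1 / norm (hvec' h D k)) *\<^sub>R hvec' h D k))"
  proof
    assume neg: "\<forall>k. pfun h D k < 0"
    have Hk': "Hmat h D k = vT (y k) + vS (x k)" for k by (simp add: Hk add.commute)
    from chern_generic[OF sy normn[OF neg] lin_vT lin_vS herm_vT vT_sq vS_sq vT_vS tr_T Hk']
    have "occupied_chern (Hmat h D) = complex_of_real (2 * degree_S2 (\<lambda>k. (1 / norm (hvec' h D k)) *\<^sub>R hvec' h D k))"
      by (simp add: y_def)
    thus "occupied_chern (Hmat h D) = complex_of_real (2 * degree_S2 (\<lambda>k. (1 / norm (hvec' h D k)) *\<^sub>R hvec' h D k))
      \<and> bdg_chern (Hmat h D) = complex_of_real (degree_S2 (\<lambda>k. (1 / norm (hvec' h D k)) *\<^sub>R hvec' h D k))"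
      by (simp add: bdg_chern_def)
  qed
  show ?thesis using part1 part2 part3 part4 part5 by blast
qed


end
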